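(* For a set $A\subset\mathbb{R}^2\times\mathbb{R}^2$ the following conditions are equivalent: (i) for all $(x^0,y^0),(x^1,y^1)\in A$, $$(1-t)c(x^0,y^0)+t\,c(x^1,y^1)\le t(1-t)\,c(y^0,y^1),\qquad t\in[0,1];$$ (ii) there is $G\in\mathfrak{M}$ such that $c(x,y)\le\phi_G(y)$ for all $(x,y)\in A$.
   Context: $c(x,y)=(x_1-y_1)(x_2-y_2)$ for $x,y\in\mathbb{R}^2$. A set $G\subset\mathbb{R}^2$ is monotone if $c(r,s)\ge0$ for all $r,s\in G$, maximal monotone if it is not a proper subset of a monotone set; $\mathfrak{M}$ is the family of maximal monotone sets. $\phi_G(y)=\inf_{x\in G}c(x,y)$. *)

theory Defs
  imports "HOL-Analysis.Analysis" "HOL-Library.Extended_Real"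
begin

definition cost :: "real \<times> real \<Rightarrow> real \<times> real \<Rightarrow> real" where
  "cost x y = (fst x - fst y) * (snd x - snd y)"

definition monotone_set :: "(real \<times> real) set \<Rightarrow> bool" where
  "monotone_set G \<longleftrightarrow> (\<forall>r\<in>G. \<forall>s\<in>G. cost r s \<ge> 0)"

definition maximal_monotone :: "(real \<times> real) set \<Rightarrow> bool" where
  "maximal_monotone G \<longleftrightarrow> monotone_set G \<and> (\<forall>H. monotone_set H \<and> G \<subseteq> H \<longrightarrow> H = G)"

text \<open>phi_G(y) = inf over x in G of c(x,y), taken in the extended reals
  (it may be -infinity, and is +infinity for empty G).\<close>
definition phi :: "(real \<times> real) set \<Rightarrow> real \<times> real \<Rightarrow> ereal" where
  "phi G y = (INF x\<in>G. ereal (cost x y))"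

end

theory Submission
  imports Defs
begin

lemma claimA:
  fixes b0 b1 K :: real
  assumes b0: "b0 \<ge> 0" and b1: "b1 \<ge> 0"
    and H: "\<forall>t::real. 0 \<le> t \<and> t \<le> 1 \<longrightarrow> t*(1-t)*K \<le> (1-t)*b0 + t*b1"
  shows "K \<le> (sqrt b0 + sqrt b1)^2"
proof (rule ccontr)
  assume "\<not> ?thesis"
  hence Kg: "K > (sqrt b0 + sqrt b1)^2" by simp
  define s where "s = sqrt b0 + sqrt b1"
  define r where "r = sqrt K"
  have s0: "s \<ge> 0" unfolding s_def using b0 b1 by simp
  have Kpos: "K > 0" using Kg zero_le_power2[of "sqrt b0 + sqrt b1"] by linarith
  have "sqrt (s^2) < sqrt K" using Kg unfolding s_def by (rule real_sqrt_less_mono)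
  hence rs: "r > s" unfolding r_def using s0 by simp
  have rK: "r^2 = K" unfolding r_def using Kpos by simp
  have e0: "(sqrt b0)^2 = b0" "(sqrt b1)^2 = b1" using b0 b1 by simp_all
  define m where "m = K + b0 - b1"
  have "m - 2*r* sqrt b0 = (r - sqrt b0 - sqrt b1) * (r - sqrt b0 + sqrt b1)"
    unfolding m_def using rK e0 by (simp add: algebra_simps power2_eq_square)
  moreover have "r - sqrt b0 - sqrt b1 > 0" using rs s_def by simp
  moreover have "r - sqrt b0 + sqrt b1 > 0" using rs s_def b0 b1 real_sqrt_ge_zero[of b1] real_sqrt_ge_zero[of b0] by linarith
  ultimately have m1: "m > 2*r* sqrt b0" using mult_pos_pos[of "r - sqrt b0 - sqrt b1" "r - sqrt b0 + sqrt b1"] by linarith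
  have r0: "r \<ge> 0" using rs s0 by simp
  have "2*r* sqrt b0 \<ge> 0" using r0 b0 by simp
  hence m0: "m > 0" using m1 by linarith
  have "m^2 > (2*r* sqrt b0)^2" using m1 r0 b0
    by (simp add: power_strict_mono)
  hence msq: "m^2 > 4*K*b0" using rK e0 by (simp add: power_mult_distrib)
  have mle: "m \<le> 2*K"
  proof -
    have "b0 - b1 = (sqrt b0 - sqrt b1)*(sqrt b0 + sqrt b1)" using e0 by (simp add: algebra_simps power2_eq_square)
    also have "\<dots> \<le> s* s" unfolding s_def using b0 b1 by (intro mult_right_mono) auto
    finally show ?thesis unfolding m_def using Kg s_def by (simp add: power2_eq_square)
  qed
  define t where "t = m/(2*K)"
  have t0: "0 \<le> t" "t \<le> 1" unfolding t_def using m0 mle Kpos by (simp_all add: field_simps)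
  have "t*(1-t)*K - ((1-t)*b0 + t*b1) = m^2/(4*K) - b0"
    unfolding t_def m_def using Kpos by (simp add: field_simps power2_eq_square)
  also have "\<dots> > 0" using msq Kpos by (simp add: field_simps)
  finally show False using H t0 by force
qed

lemma core_real:
  fixes b0 b1 D E p q :: real
  assumes b0: "b0 \<ge> 0" and b1: "b1 \<ge> 0"
    and H: "\<forall>t::real. 0 \<le> t \<and> t \<le> 1 \<longrightarrow> t*(1-t)*(E^2-D^2) \<le> (1-t)*b0 + t*b1"
    and pq: "p - q = D"
  shows "E \<le> sqrt (p^2+b0) + sqrt (q^2+b1)"
proof -
  have A: "E^2 - D^2 \<le> (sqrt b0 + sqrt b1)^2" using claimA[OF b0 b1 H] .
  have e0: "(sqrt b0)^2 = b0" "(sqrt b1)^2 = b1" using b0 b1 by simp_all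
  have "(sqrt b0 * sqrt b1 - p*q)^2 \<le> (p^2+b0)*(q^2+b1)"
  proof -
    have "(p^2+b0)*(q^2+b1) - (sqrt b0 * sqrt b1 - p*q)^2 = (p * sqrt b1 + sqrt b0 * q)^2"
      using e0 by (simp add: algebra_simps power2_eq_square)
    thus ?thesis using zero_le_power2[of "p * sqrt b1 + sqrt b0 * q"] by linarith
  qed
  hence "sqrt b0 * sqrt b1 - p*q \<le> sqrt ((p^2+b0)*(q^2+b1))" by (rule real_le_rsqrt)
  hence S: "sqrt b0 * sqrt b1 - p*q \<le> sqrt (p^2+b0) * sqrt (q^2+b1)" by (simp add: real_sqrt_mult)
  have f0: "(sqrt (p^2+b0))^2 = p^2+b0" "(sqrt (q^2+b1))^2 = q^2+b1" using b0 b1 by simp_all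
  have "E^2 \<le> (sqrt (p^2+b0) + sqrt (q^2+b1))^2"
  proof -
    have "(sqrt (p^2+b0) + sqrt (q^2+b1))^2 = p^2+b0+q^2+b1 + 2*(sqrt (p^2+b0) * sqrt (q^2+b1))"
      using f0 by (simp add: power2_eq_square algebra_simps)
    moreover have "(sqrt b0 + sqrt b1)^2 = b0 + b1 + 2*(sqrt b0 * sqrt b1)"
      using e0 by (simp add: power2_eq_square algebra_simps)
    moreover have "D^2 = p^2 + q^2 - 2*(p*q)" using pq by (auto simp: power2_eq_square algebra_simps)
    ultimately show ?thesis using A S by linarith
  qed
  thus ?thesis by (rule power2_le_imp_le) (simp add: b0 b1)
qed

lemma sqrt_lip:
  fixes a b c beta :: real assumes "beta \<ge> 0"
  shows "sqrt ((a-c)^2 + beta) \<le> sqrt ((b-c)^2 + beta) + \<bar>a-b\<bar>"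
proof (rule real_le_lsqrt)
  show "0 \<le> sqrt ((b-c)^2 + beta) + \<bar>a-b\<bar>" using assms by simp
  have F: "(sqrt ((b-c)^2 + beta))^2 = (b-c)^2 + beta" using assms by simp
  have "\<bar>b-c\<bar> \<le> sqrt ((b-c)^2 + beta)" using assms by (simp add: real_le_rsqrt)
  hence "(b-c)*(a-b) \<le> sqrt ((b-c)^2 + beta) * \<bar>a-b\<bar>"
  proof -
    have "(b-c)*(a-b) \<le> \<bar>b-c\<bar> * \<bar>a-b\<bar>" by (metis abs_ge_self abs_mult)
    also have "\<dots> \<le> sqrt ((b-c)^2 + beta) * \<bar>a-b\<bar>" using \<open>\<bar>b-c\<bar> \<le> _\<close> by (rule mult_right_mono) simp
    finally show ?thesis .
  qed
  thus "(a-c)^2 + beta \<le> (sqrt ((b-c)^2 + beta) + \<bar>a-b\<bar>)^2"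
    using F by (simp add: power2_eq_square algebra_simps)
qed


definition uu :: "real \<times> real \<Rightarrow> real" where "uu y = fst y + snd y"
definition vv :: "real \<times> real \<Rightarrow> real" where "vv y = snd y - fst y"

lemma cost_uv: "cost a b = ((uu a - uu b)^2 - (vv a - vv b)^2)/4"
  unfolding cost_def uu_def vv_def by (simp add: power2_eq_square algebra_simps)

lemma graph_mm:
  fixes h :: "real \<Rightarrow> real"
  assumes L: "\<And>a b. \<bar>h a - h b\<bar> \<le> \<bar>a - b\<bar>"
  shows "maximal_monotone {g. vv g = h (uu g)}"
  unfolding maximal_monotone_def
proof (intro conjI allI impI)
  let ?G = "{g. vv g = h (uu g)}"
  show mono: "monotone_set ?G" unfolding monotone_set_def
  proof (intro ballI)
    fix r s assume "r \<in> ?G" "s \<in> ?G"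
    hence "\<bar>vv r - vv s\<bar> \<le> \<bar>uu r - uu s\<bar>" using L by simp
    hence "(vv r - vv s)^2 \<le> (uu r - uu s)^2" by (simp add: abs_le_square_iff)
    thus "cost r s \<ge> 0" unfolding cost_uv by simp
  qed
  fix H assume H: "monotone_set H \<and> ?G \<subseteq> H"
  show "H = ?G"
  proof
    show "H \<subseteq> ?G"
    proof
      fix p assume p: "p \<in> H"
      define q where "q = ((uu p - h (uu p))/2, (uu p + h (uu p))/2)"
      have uq: "uu q = uu p" and vq: "vv q = h (uu p)" unfolding q_def uu_def vv_def by (simp_all add: field_simps)
      hence "q \<in> ?G" by simp
      hence "q \<in> H" using H by blast
      hence "cost p q \<ge> 0" using H p unfolding monotone_set_def by blast
      hence "(vv p - vv q)^2 \<le> 0" unfolding cost_uv using uq by simp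
      hence "vv p = vv q" by simp
      thus "p \<in> ?G" using vq by simp
    qed
  qed (use H in blast)
qed

lemma exists_le0:
  assumes "maximal_monotone G" shows "\<exists>g\<in>G. cost g y \<le> 0"
proof (rule ccontr)
  assume "\<not> ?thesis"
  hence pos: "\<forall>g\<in>G. cost g y > 0" by auto
  have cs: "\<And>a b. cost a b = cost b a" unfolding cost_def by (simp add: algebra_simps)
  have "monotone_set (insert y G)" using assms pos cs unfolding maximal_monotone_def monotone_set_def
    by (auto simp: cost_def less_imp_le)
  hence "insert y G = G" using assms unfolding maximal_monotone_def by blast
  hence "y \<in> G" by blast
  with pos have "cost y y > 0" by blast
  thus False by (simp add: cost_def)
qed

lemma dir2:
  assumes G: "maximal_monotone G" and A: "\<forall>(x, y)\<in>A. ereal (cost x y) \<le> phi G y"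
  shows "\<forall>(x0, y0)\<in>A. \<forall>(x1, y1)\<in>A. \<forall>t::real. 0 \<le> t \<and> t \<le> 1 \<longrightarrow>
            (1 - t) * cost x0 y0 + t * cost x1 y1 \<le> t * (1 - t) * cost y0 y1"
proof (clarify)
  fix x0 y0 x1 y1 and t :: real
  assume k0: "(x0, y0) \<in> A" and k1: "(x1, y1) \<in> A" and t: "0 \<le> t" "t \<le> 1"
  define yt where "yt = ((1-t) * fst y0 + t * fst y1, (1-t) * snd y0 + t * snd y1)"
  obtain g where g: "g \<in> G" "cost g yt \<le> 0" using exists_le0[OF G] by blast
  have "ereal (cost x0 y0) \<le> phi G y0" using A k0 by blast
  also have "phi G y0 \<le> ereal (cost g y0)" unfolding phi_def by (rule INF_lower[OF g(1)])
  finally have "ereal (cost x0 y0) \<le> ereal (cost g y0)" .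
  hence c0: "cost x0 y0 \<le> cost g y0" by simp
  have "ereal (cost x1 y1) \<le> phi G y1" using A k1 by blast
  also have "phi G y1 \<le> ereal (cost g y1)" unfolding phi_def by (rule INF_lower[OF g(1)])
  finally have "ereal (cost x1 y1) \<le> ereal (cost g y1)" .
  hence c1: "cost x1 y1 \<le> cost g y1" by simp
  have id: "cost g yt = (1-t)*cost g y0 + t*cost g y1 - t*(1-t)*cost y0 y1"
    unfolding yt_def cost_def by (simp add: algebra_simps power2_eq_square)
  have "(1-t)*cost x0 y0 \<le> (1-t)*cost g y0" using c0 t by (simp add: mult_left_mono)
  moreover have "t*cost x1 y1 \<le> t*cost g y1" using c1 t by (simp add: mult_left_mono)
  ultimately show "(1 - t) * cost x0 y0 + t * cost x1 y1 \<le> t * (1 - t) * cost y0 y1"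
    using id g(2) by linarith
qed


lemma dir1:
  fixes A :: "((real \<times> real) \<times> (real \<times> real)) set"
  assumes P: "\<forall>(x0, y0)\<in>A. \<forall>(x1, y1)\<in>A. \<forall>t::real. 0 \<le> t \<and> t \<le> 1 \<longrightarrow>
            (1 - t) * cost x0 y0 + t * cost x1 y1 \<le> t * (1 - t) * cost y0 y1"
  shows "\<exists>G. maximal_monotone G \<and> (\<forall>(x, y)\<in>A. ereal (cost x y) \<le> phi G y)"
proof (cases "A = {}")
  case True
  have "maximal_monotone {g. vv g = (\<lambda>_. 0::real) (uu g)}" by (rule graph_mm) simp
  thus ?thesis using True by blast
next
  case False
  then obtain j0 where j0: "j0 \<in> A" by blast
  define b where "b k = -4 * cost (fst k) (snd k)" for k
  define U where "U k u = vv (snd k) + sqrt ((u - uu (snd k))^2 + b k)" for k u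
  have P': "\<And>k j t. k \<in> A \<Longrightarrow> j \<in> A \<Longrightarrow> 0 \<le> t \<Longrightarrow> t \<le> 1 \<Longrightarrow>
     (1 - t) * cost (fst k) (snd k) + t * cost (fst j) (snd j) \<le> t * (1 - t) * cost (snd k) (snd j)"
    using P by fastforce
  have bnn: "b k \<ge> 0" if "k \<in> A" for k
    using P'[OF that that, of 0] unfolding b_def by simp
  have core: "vv (snd j) - sqrt ((u - uu (snd j))^2 + b j) \<le> U k u" if k: "k \<in> A" and j: "j \<in> A" for k j u
  proof -
    have H: "\<forall>t::real. 0 \<le> t \<and> t \<le> 1 \<longrightarrow> t*(1-t)*((vv (snd j) - vv (snd k))^2 - (uu (snd j) - uu (snd k))^2) \<le> (1-t)*b k + t*b j"
    proof (intro allI impI)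
      fix t :: real assume t: "0 \<le> t \<and> t \<le> 1"
      have "(1 - t) * cost (fst k) (snd k) + t * cost (fst j) (snd j) \<le> t * (1 - t) * cost (snd k) (snd j)"
        using P'[OF k j] t by blast
      moreover have "cost (snd k) (snd j) = ((uu (snd j) - uu (snd k))^2 - (vv (snd j) - vv (snd k))^2)/4"
        unfolding cost_uv by (simp add: power2_commute)
      ultimately show "t*(1-t)*((vv (snd j) - vv (snd k))^2 - (uu (snd j) - uu (snd k))^2) \<le> (1-t)*b k + t*b j"
        unfolding b_def by (simp add: algebra_simps)
    qed
    have "vv (snd j) - vv (snd k) \<le> sqrt ((u - uu (snd k))^2 + b k) + sqrt ((u - uu (snd j))^2 + b j)"
      by (rule core_real[OF bnn[OF k] bnn[OF j] H]) simp
    thus ?thesis unfolding U_def by simp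
  qed
  define h where "h u = (INF k\<in>A. U k u)" for u
  have bdd: "bdd_below ((\<lambda>k. U k u) ` A)" for u
    by (rule bdd_belowI2[where m="vv (snd j0) - sqrt ((u - uu (snd j0))^2 + b j0)"]) (rule core[OF _ j0])
  have hU: "h u \<le> U k u" if "k \<in> A" for k u unfolding h_def by (rule cINF_lower[OF bdd that])
  have hL: "vv (snd j) - sqrt ((u - uu (snd j))^2 + b j) \<le> h u" if "j \<in> A" for j u
    unfolding h_def by (rule cINF_greatest[OF False]) (rule core[OF _ that])
  have lip1: "h a \<le> h b' + \<bar>a - b'\<bar>" for a b'
  proof -
    have "h a - \<bar>a - b'\<bar> \<le> h b'" unfolding h_def[of b']
    proof (rule cINF_greatest[OF False])
      fix k assume k: "k \<in> A"
      have "h a \<le> U k a" by (rule hU[OF k])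
      also have "\<dots> \<le> U k b' + \<bar>a - b'\<bar>" unfolding U_def using sqrt_lip[OF bnn[OF k]] by simp
      finally show "h a - \<bar>a - b'\<bar> \<le> U k b'" by simp
    qed
    thus ?thesis by simp
  qed
  have lip: "\<bar>h a - h b'\<bar> \<le> \<bar>a - b'\<bar>" for a b'
    using lip1[of a b'] lip1[of b' a] by (simp add: abs_minus_commute abs_le_iff)
  have mm: "maximal_monotone {g. vv g = h (uu g)}" by (rule graph_mm[OF lip])
  have "\<forall>(x, y)\<in>A. ereal (cost x y) \<le> phi {g. vv g = h (uu g)} y"
  proof (clarify)
    fix x y assume xy: "(x, y) \<in> A"
    show "ereal (cost x y) \<le> phi {g. vv g = h (uu g)} y" unfolding phi_def
    proof (rule INF_greatest)
      fix g assume "g \<in> {g. vv g = h (uu g)}"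
      hence vg: "vv g = h (uu g)" by simp
      define S where "S = sqrt ((uu g - uu y)^2 + b (x, y))"
      have "vv g - vv y \<le> S" using hU[OF xy, of "uu g"] vg unfolding U_def S_def by simp
      moreover have "vv y - vv g \<le> S" using hL[OF xy, of "uu g"] vg unfolding S_def by simp
      ultimately have "\<bar>vv g - vv y\<bar> \<le> S" by simp
      hence "(vv g - vv y)^2 \<le> S^2" using power_mono[OF _ abs_ge_zero, of _ S 2] by simp
      also have "S^2 = (uu g - uu y)^2 + b (x, y)" unfolding S_def using bnn[OF xy] by simp
      finally have "(vv g - vv y)^2 \<le> (uu g - uu y)^2 + b (x, y)" .
      hence "cost x y \<le> cost g y" unfolding cost_uv[of g y] b_def by simp
      thus "ereal (cost x y) \<le> ereal (cost g y)" by simp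
    qed
  qed
  with mm show ?thesis by blast
qed

theorem lemma6:
  fixes A :: "((real \<times> real) \<times> (real \<times> real)) set"
  shows "(\<forall>(x0, y0)\<in>A. \<forall>(x1, y1)\<in>A. \<forall>t::real. 0 \<le> t \<and> t \<le> 1 \<longrightarrow>
            (1 - t) * cost x0 y0 + t * cost x1 y1 \<le> t * (1 - t) * cost y0 y1)
         \<longleftrightarrow> (\<exists>G. maximal_monotone G \<and> (\<forall>(x, y)\<in>A. ereal (cost x y) \<le> phi G y))"
  using dir1[of A] dir2[of _ A] by blast

end
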